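(* Let $h=(v_0,v_1,\dots,v_{n+1})$ be a Hamiltonian cycle over $N$ for an FSTSP instance $(n,N,t_R,t_D)$, and let $0\le i<j<k\le n+1$ be such that the drone is fast in operation $o_{i,j,k}$ (with respect to $h$). Then there exists an optimal solution of the h-FSTSP for $h$ that contains no operation of the form $o_{i',j,k'}$ with $0\le i'\le i$, $k\le k'\le n+1$ and $(i',k')\neq(i,k)$. That is, all such operations can be ignored by an algorithm for the h-FSTSP without losing optimality.
   Context: An FSTSP instance consists of an integer $n>0$, the set of customers $C=\{1,\dots,n\}$, the node set $N=\{0,1,\dots,n+1\}$ where $0$ and $n+1$ both denote the depot, and nonnegative truck travel times $t_R(u,v)$ and drone travel times $t_D(u,v)$ for all pairs of nodes $u,v$. An operation is a pair $o=(r,d)$: $r=(v^r_1,\dots,v^r_{|r|})$, $|r|\ge 2$, is the truck path with time $t(r)=\sum_{\ell=1}^{|r|-1} t_R(v^r_\ell,v^r_{\ell+1})$; $d$ is either empty or $d=(v^r_1,v^d,v^r_{|r|})$ with $v^d\in C$ a drone node not on $r$, with time $t(d)=t_D(v^r_1,v^d)+t_D(v^d,v^r_{|r|})$. The time of the operation is $t(o)=\max\{t(r),t(d)\}$ if $d$ is nonempty and $t(o)=t(r)$ otherwise. A solution is a sequence $S=(o_1,\dots,o_m)$ of operations $o_\ell=(r_\ell,d_\ell)$ such that the first node of $r_1$ is the depot $0$, the last node of $r_m$ is the depot $n+1$, the depot appears in no other position, for each $\ell<m$ the last node of $r_\ell$ equals the first node of $r_{\ell+1}$, and every customer is served exactly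 once (as a truck node, shared endpoints of consecutive truck paths counting once, or as a drone node). Its time is $t(S)=\sum_\ell t(o_\ell)$. A Hamiltonian cycle over $N$ is a sequence $h=(v_0,\dots,v_{n+1})$ with $v_0=0$, $v_{n+1}=n+1$ and $(v_1,\dots,v_n)$ a permutation of $C$. A solution respects $h$ if the truck nodes, in order of visit, appear in the same relative order as in $h$ and every drone node lies strictly between its operation's launch and rendezvous nodes in $h$; the h-FSTSP asks for a minimum-time solution among those respecting $h$. For indices $i<j<k$, $o_{i,j,k}=(r,d)$ denotes the operation with truck path $r=(v_i,\dots,v_{j-1},v_{j+1},\dots,v_k)$ and drone path $d=(v_i,v_j,v_k)$. The drone is fast in $o_{i,j,k}$ if $t(d)\le t(r)$. *)

theory Defs
  imports Complex_Main
begin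

text \<open>Nodes are natural numbers: 0 and n+1 are the two copies of the depot,
  customers are 1..n.  An operation is a pair (r, d) where r is the truck path
  (list of nodes) and d = Some w encodes the drone path (hd r, w, last r),
  d = None the empty drone path.  A Hamiltonian cycle h = (v_0,...,v_{n+1})
  is represented by the function v (index to node).\<close>

type_synonym operation = "nat list \<times> nat option"

fun path_time :: "(nat \<Rightarrow> nat \<Rightarrow> real) \<Rightarrow> nat list \<Rightarrow> real" where
  "path_time tR (x # y # xs) = tR x y + path_time tR (y # xs)"
| "path_time tR _ = 0"

definition drone_time :: "(nat \<Rightarrow> nat \<Rightarrow> real) \<Rightarrow> operation \<Rightarrow> nat \<Rightarrow> real" where
  "drone_time tD op w = tD (hd (fst op)) w + tD w (last (fst op))"

definition op_time :: "(nat \<Rightarrow> nat \<Rightarrow> real) \<Rightarrow> (nat \<Rightarrow> nat \<Rightarrow> real) \<Rightarrow> operation \<Rightarrow> real" where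
  "op_time tR tD op = (case snd op of
      None \<Rightarrow> path_time tR (fst op)
    | Some w \<Rightarrow> max (path_time tR (fst op)) (drone_time tD op w))"

definition sol_time :: "(nat \<Rightarrow> nat \<Rightarrow> real) \<Rightarrow> (nat \<Rightarrow> nat \<Rightarrow> real) \<Rightarrow> operation list \<Rightarrow> real" where
  "sol_time tR tD S = sum_list (map (op_time tR tD) S)"

text \<open>Truck nodes in order of visit (shared endpoints counted once).\<close>
definition truck_seq :: "operation list \<Rightarrow> nat list" where
  "truck_seq S = (case S of [] \<Rightarrow> [] | op # os \<Rightarrow> fst op @ concat (map (tl \<circ> fst) os))"

definition drone_nodes :: "operation list \<Rightarrow> nat list" where
  "drone_nodes S = concat (map (\<lambda>op. case snd op of None \<Rightarrow> [] | Some w \<Rightarrow> [w]) S)"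

definition is_solution :: "nat \<Rightarrow> operation list \<Rightarrow> bool" where
  "is_solution n S \<longleftrightarrow>
     S \<noteq> [] \<and>
     (\<forall>op \<in> set S. length (fst op) \<ge> 2 \<and> set (fst op) \<subseteq> {0..n+1} \<and>
        (\<forall>w. snd op = Some w \<longrightarrow> w \<in> {1..n} \<and> w \<notin> set (fst op))) \<and>
     hd (fst (hd S)) = 0 \<and> last (fst (last S)) = n + 1 \<and>
     (\<forall>l. Suc l < length S \<longrightarrow> last (fst (S ! l)) = hd (fst (S ! Suc l))) \<and>
     count_list (truck_seq S) 0 = 1 \<and> count_list (truck_seq S) (n + 1) = 1 \<and>
     (\<forall>c \<in> {1..n}. count_list (truck_seq S @ drone_nodes S) c = 1)"

definition is_hamiltonian :: "nat \<Rightarrow> (nat \<Rightarrow> nat) \<Rightarrow> bool" where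
  "is_hamiltonian n v \<longleftrightarrow> v 0 = 0 \<and> v (n + 1) = n + 1 \<and> bij_betw v {1..n} {1..n}"

definition respects_h :: "nat \<Rightarrow> (nat \<Rightarrow> nat) \<Rightarrow> operation list \<Rightarrow> bool" where
  "respects_h n v S \<longleftrightarrow>
     (\<exists>ps. sorted_wrt (<) ps \<and> (\<forall>q \<in> set ps. q \<le> n + 1) \<and> map v ps = truck_seq S) \<and>
     (\<forall>op \<in> set S. \<forall>w. snd op = Some w \<longrightarrow>
        (\<exists>a b c. a < b \<and> b < c \<and> c \<le> n + 1 \<and>
           v a = hd (fst op) \<and> v b = w \<and> v c = last (fst op)))"

definition h_optimal :: "nat \<Rightarrow> (nat \<Rightarrow> nat \<Rightarrow> real) \<Rightarrow> (nat \<Rightarrow> nat \<Rightarrow> real) \<Rightarrow> (nat \<Rightarrow> nat)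
    \<Rightarrow> operation list \<Rightarrow> bool" where
  "h_optimal n tR tD v S \<longleftrightarrow> is_solution n S \<and> respects_h n v S \<and>
     (\<forall>S'. is_solution n S' \<and> respects_h n v S' \<longrightarrow> sol_time tR tD S \<le> sol_time tR tD S')"

text \<open>o_{i,j,k}: truck path (v_i,...,v_{j-1},v_{j+1},...,v_k), drone path (v_i,v_j,v_k).\<close>
definition op_ijk :: "(nat \<Rightarrow> nat) \<Rightarrow> nat \<Rightarrow> nat \<Rightarrow> nat \<Rightarrow> operation" where
  "op_ijk v i j k = (map v ([i..<j] @ [Suc j..<Suc k]), Some (v j))"

definition drone_fast :: "(nat \<Rightarrow> nat \<Rightarrow> real) \<Rightarrow> (nat \<Rightarrow> nat \<Rightarrow> real) \<Rightarrow> operation \<Rightarrow> bool" where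
  "drone_fast tR tD op \<longleftrightarrow> (case snd op of None \<Rightarrow> False
      | Some w \<Rightarrow> drone_time tD op w \<le> path_time tR (fst op))"

end

theory Submission
  imports Defs
begin


definition lnk :: "operation \<Rightarrow> operation \<Rightarrow> bool" where
  "lnk a b \<longleftrightarrow> last (fst a) = hd (fst b)"

lemma link_iff: "(\<forall>l. Suc l < length S \<longrightarrow> last (fst (S ! l)) = hd (fst (S ! Suc l)))
   \<longleftrightarrow> successively lnk S"
proof (induction S)
  case Nil then show ?case by simp
next
  case (Cons a S)
  show ?case
  proof (cases S)
    case Nil then show ?thesis by simp
  next
    case (Cons b T)
    have "(\<forall>l. Suc l < length (a # S) \<longrightarrow> last (fst ((a # S) ! l)) = hd (fst ((a # S) ! Suc l)))
      \<longleftrightarrow> lnk a b \<and> (\<forall>l. Suc l < length S \<longrightarrow> last (fst (S ! l)) = hd (fst (S ! Suc l)))"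
      (is "?L \<longleftrightarrow> ?R")
    proof
      assume L: ?L
      have "lnk a b" using L[rule_format, of 0] Cons by (simp add: lnk_def)
      moreover have "\<forall>l. Suc l < length S \<longrightarrow> last (fst (S ! l)) = hd (fst (S ! Suc l))"
        using L by (metis Suc_less_eq length_Cons nth_Cons_Suc)
      ultimately show ?R by blast
    next
      assume R: ?R
      show ?L
      proof (intro allI impI)
        fix l assume l: "Suc l < length (a # S)"
        show "last (fst ((a # S) ! l)) = hd (fst ((a # S) ! Suc l))"
        proof (cases l)
          case 0 then show ?thesis using R Cons by (simp add: lnk_def)
        next
          case (Suc m) then show ?thesis using R l by simp
        qed
      qed
    qed
    then show ?thesis using Cons.IH Cons by simp
  qed
qed

lemma truck_seq_append:
  "X \<noteq> [] \<Longrightarrow> truck_seq (X @ Y) = truck_seq X @ concat (map (tl \<circ> fst) Y)"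
  by (cases X) (auto simp: truck_seq_def)

lemma truck_seq_Cons: "truck_seq (q # Y) = fst q @ concat (map (tl \<circ> fst) Y)"
  by (simp add: truck_seq_def)

lemma drone_nodes_append[simp]: "drone_nodes (X @ Y) = drone_nodes X @ drone_nodes Y"
  by (simp add: drone_nodes_def)

lemma last_truck_seq:
  assumes "Q \<noteq> []" "\<forall>q\<in>set Q. length (fst q) \<ge> 2"
  shows "last (truck_seq Q) = last (fst (last Q))"
  using assms
proof (induction Q rule: rev_induct)
  case Nil then show ?case by simp
next
  case (snoc q Q)
  show ?case
  proof (cases "Q = []")
    case True then show ?thesis using snoc.prems by (simp add: truck_seq_def)
  next
    case False
    have "tl (fst q) \<noteq> []" using snoc.prems by (cases "fst q") auto
    then show ?thesis using False by (cases "fst q") (auto simp: truck_seq_append)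
  qed
qed

lemma path_time_app:
  "xs \<noteq> [] \<Longrightarrow> path_time tR (xs @ ys) = path_time tR xs + path_time tR (last xs # ys)"
  by (induction xs rule: induct_list012) auto

lemma path_time_truck_seq:
  assumes "Q \<noteq> []" "\<forall>q\<in>set Q. length (fst q) \<ge> 2" "successively lnk Q"
  shows "path_time tR (truck_seq Q) = (\<Sum>q\<leftarrow>Q. path_time tR (fst q))"
  using assms
proof (induction Q rule: rev_induct)
  case Nil then show ?case by simp
next
  case (snoc q Q)
  show ?case
  proof (cases "Q = []")
    case True then show ?thesis by (simp add: truck_seq_def)
  next
    case False
    have sQ: "successively lnk Q" and lk: "lnk (last Q) q"
      using snoc.prems(3) False by (auto simp: successively_append_iff)
    have ne: "truck_seq Q \<noteq> []" using False snoc.prems(2)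
      by (cases Q) (auto simp: truck_seq_def)
    have fq: "fst q = hd (fst q) # tl (fst q)" using snoc.prems(2)
      by (cases "fst q") auto
    have "path_time tR (truck_seq (Q @ [q])) = path_time tR (truck_seq Q @ tl (fst q))"
      using False by (simp add: truck_seq_append)
    also have "\<dots> = path_time tR (truck_seq Q) + path_time tR (last (truck_seq Q) # tl (fst q))"
      using ne by (rule path_time_app)
    also have "last (truck_seq Q) = hd (fst q)"
      using last_truck_seq[of Q] False snoc.prems(2) lk by (simp add: lnk_def)
    also have "hd (fst q) # tl (fst q) = fst q" using fq by simp
    finally show ?thesis using snoc.IH False sQ snoc.prems(2) by simp
  qed
qed

lemma truck_seq_replace:
  assumes "Q \<noteq> []" "fst (hd Q) \<noteq> []" "truck_seq Q = fst o'"
  shows "truck_seq (A @ Q @ B) = truck_seq (A @ o' # B)"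
proof -
  obtain q Q' where Q: "Q = q # Q'" using assms(1) by (cases Q) auto
  have tq: "fst o' = fst q @ concat (map (tl \<circ> fst) Q')" using assms(3) Q by (simp add: truck_seq_def)
  show ?thesis
  proof (cases "A = []")
    case True then show ?thesis using Q tq by (simp add: truck_seq_def)
  next
    case False
    have "tl (fst o') = tl (fst q) @ concat (map (tl \<circ> fst) Q')" using tq assms(2) Q by simp
    then show ?thesis using False Q by (simp add: truck_seq_append)
  qed
qed

definition opok :: "nat \<Rightarrow> operation \<Rightarrow> bool" where
  "opok n op \<longleftrightarrow> length (fst op) \<ge> 2 \<and> set (fst op) \<subseteq> {0..n+1} \<and>
        (\<forall>w. snd op = Some w \<longrightarrow> w \<in> {1..n} \<and> w \<notin> set (fst op))"

definition dok :: "nat \<Rightarrow> (nat \<Rightarrow> nat) \<Rightarrow> operation \<Rightarrow> bool" where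
  "dok n v op \<longleftrightarrow> (\<forall>w. snd op = Some w \<longrightarrow>
        (\<exists>a b c. a < b \<and> b < c \<and> c \<le> n + 1 \<and>
           v a = hd (fst op) \<and> v b = w \<and> v c = last (fst op)))"

lemma is_solution_alt: "is_solution n S \<longleftrightarrow>
     S \<noteq> [] \<and> (\<forall>op \<in> set S. opok n op) \<and>
     hd (fst (hd S)) = 0 \<and> last (fst (last S)) = n + 1 \<and> successively lnk S \<and>
     count_list (truck_seq S) 0 = 1 \<and> count_list (truck_seq S) (n + 1) = 1 \<and>
     (\<forall>c \<in> {1..n}. count_list (truck_seq S @ drone_nodes S) c = 1)"
  unfolding is_solution_def opok_def link_iff by blast

lemma respects_alt: "respects_h n v S \<longleftrightarrow>
     (\<exists>ps. sorted_wrt (<) ps \<and> (\<forall>q \<in> set ps. q \<le> n + 1) \<and> map v ps = truck_seq S) \<and>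
     (\<forall>op \<in> set S. dok n v op)"
  unfolding respects_h_def dok_def by blast

lemma replace:
  assumes sol: "is_solution n (A @ o' # B)" and resp: "respects_h n v (A @ o' # B)"
    and Qne: "Q \<noteq> []" and Qok: "\<forall>q\<in>set Q. opok n q \<and> dok n v q"
    and Qs: "successively lnk Q" and Qt: "truck_seq Q = fst o'"
    and Qd: "drone_nodes Q = drone_nodes [o']"
  shows "is_solution n (A @ Q @ B) \<and> respects_h n v (A @ Q @ B)"
proof -
  have len: "\<forall>q\<in>set Q. length (fst q) \<ge> 2" using Qok by (auto simp: opok_def)
  have hne: "fst (hd Q) \<noteq> []" using len Qne by (cases Q) auto
  have T: "truck_seq (A @ Q @ B) = truck_seq (A @ o' # B)"
    using truck_seq_replace[OF Qne hne Qt] .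
  have D: "drone_nodes (A @ Q @ B) = drone_nodes (A @ o' # B)"
    using Qd by (simp add: drone_nodes_def)
  have hQ: "hd (fst (hd Q)) = hd (fst o')"
    using Qt hne Qne by (cases Q) (auto simp: truck_seq_def, metis hd_append2)
  have lQ: "last (fst (last Q)) = last (fst o')"
    using last_truck_seq[OF Qne len] Qt by simp
  have succ: "successively lnk (A @ o' # B)" using sol by (simp add: is_solution_alt)
  have succ2: "successively lnk (A @ Q @ B)"
    using succ Qs Qne hQ lQ
    by (cases "B = []"; cases "A = []") (auto simp: successively_append_iff successively_Cons lnk_def)
  have hd2: "hd (fst (hd (A @ Q @ B))) = 0"
    using sol hQ Qne by (cases A) (auto simp: is_solution_alt)
  have lst2: "last (fst (last (A @ Q @ B))) = n + 1"
    using sol lQ Qne by (cases "B = []") (auto simp: is_solution_alt)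
  have sol2: "is_solution n (A @ Q @ B)"
    using sol Qok T D succ2 hd2 lst2 Qne unfolding is_solution_alt by auto
  have resp2: "respects_h n v (A @ Q @ B)"
    using resp Qok T unfolding respects_alt by auto
  show ?thesis using sol2 resp2 by blast
qed

lemma replace_time:
  assumes Qne: "Q \<noteq> []" and len: "\<forall>q\<in>set Q. length (fst q) \<ge> 2"
    and Qs: "successively lnk Q" and Qt: "truck_seq Q = fst o'"
    and Qo: "\<forall>q\<in>set Q. op_time tR tD q = path_time tR (fst q)"
  shows "sol_time tR tD (A @ Q @ B) \<le> sol_time tR tD (A @ o' # B)"
proof -
  have "sol_time tR tD Q = (\<Sum>q\<leftarrow>Q. path_time tR (fst q))"
    unfolding sol_time_def using Qo by (metis (mono_tags, lifting) map_eq_conv)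
  also have "\<dots> = path_time tR (fst o')"
    using path_time_truck_seq[OF Qne len Qs] Qt by simp
  also have "\<dots> \<le> op_time tR tD o'"
    by (auto simp: op_time_def split: option.split)
  finally show ?thesis by (simp add: sol_time_def)
qed



lemma ham_v:
  assumes "is_hamiltonian n v"
  shows "inj_on v {0..n+1}" "v ` {0..n+1} = {0..n+1}"
proof -
  have b: "bij_betw v {1..n} {1..n}" and v0: "v 0 = 0" and vn: "v (n+1) = n+1"
    using assms by (auto simp: is_hamiltonian_def)
  have eq: "{0..n+1} = insert 0 (insert (n+1) {1..n})" by auto
  have im: "v ` {1..n} = {1..n}" using b by (simp add: bij_betw_def)
  have i1: "inj_on v {1..n}" using b by (simp add: bij_betw_def)
  have "inj_on v (insert (n+1) {1..n})" using i1 im vn by (auto simp: inj_on_insert)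
  moreover have "v ` (insert (n+1) {1..n}) = insert (n+1) {1..n}" using im vn by simp
  ultimately show "inj_on v {0..n+1}" unfolding eq using v0 by (auto simp: inj_on_insert)
  show "v ` {0..n+1} = {0..n+1}" unfolding eq using im v0 vn by auto
qed

lemma count_distinct: "distinct xs \<Longrightarrow> x \<in> set xs \<Longrightarrow> count_list xs x = 1"
  by (induction xs) (auto simp: count_list_0_iff)

lemma len_concat_tl: "\<forall>p\<in>set os. length (fst p) \<ge> 2 \<Longrightarrow> length (concat (map (tl \<circ> fst) os)) \<ge> length os"
  by (induction os) auto

lemma len_mem_concat: "xs \<in> set xss \<Longrightarrow> length xs \<le> length (concat xss)"
  by (induction xss) auto

lemma sol_bounds:
  assumes "is_solution n S" "respects_h n v S"
  shows "length S \<le> n + 2" "\<forall>q\<in>set S. length (fst q) \<le> n + 3"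
proof -
  obtain ps where ps: "sorted_wrt (<) ps" "\<forall>q\<in>set ps. q \<le> n + 1" "map v ps = truck_seq S"
    using assms(2) by (auto simp: respects_h_def)
  have "distinct ps" using ps(1) by (simp add: strict_sorted_iff)
  then have "length ps = card (set ps)" by (simp add: distinct_card)
  also have "\<dots> \<le> card {0..n+1}" using ps(2) by (intro card_mono) auto
  finally have "length ps \<le> n + 2" by simp
  moreover have "length (truck_seq S) = length ps" using ps(3) by (metis length_map)
  ultimately have lt: "length (truck_seq S) \<le> n + 2" by simp
  obtain q os where S: "S = q # os" using assms(1) by (cases S) (auto simp: is_solution_def)
  have len: "\<forall>p\<in>set S. length (fst p) \<ge> 2" using assms(1) by (auto simp: is_solution_def)
  have ts: "truck_seq S = fst q @ concat (map (tl \<circ> fst) os)" using S by (simp add: truck_seq_def)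
  have "length os \<le> length (concat (map (tl \<circ> fst) os))" using len S by (intro len_concat_tl) auto
  moreover have "length (fst q) \<ge> 2" using len S by auto
  ultimately show "length S \<le> n + 2" using lt ts S by simp
  show "\<forall>p\<in>set S. length (fst p) \<le> n + 3"
  proof
    fix p assume o: "p \<in> set S"
    show "length (fst p) \<le> n + 3"
    proof (cases "p = q")
      case True then show ?thesis using lt ts by simp
    next
      case False
      then have "p \<in> set os" using o S by simp
      then have "tl (fst p) \<in> set (map (tl \<circ> fst) os)" by auto
      then have "length (tl (fst p)) \<le> length (truck_seq S)" using ts len_mem_concat[of "tl (fst p)" "map (tl \<circ> fst) os"] by simp
      then show ?thesis using lt by simp
    qed
  qed
qed

lemma finite_sols: "finite {S. is_solution n S \<and> respects_h n v S}"
proof -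
  let ?Ops = "{r. set r \<subseteq> {0..n+1} \<and> length r \<le> n + 3} \<times> insert None (Some ` {1..n})"
  have fo: "finite ?Ops"
    by (intro finite_cartesian_product finite_lists_length_le finite.insertI finite_imageI) simp_all
  have "{S. is_solution n S \<and> respects_h n v S} \<subseteq> {S. set S \<subseteq> ?Ops \<and> length S \<le> n + 2}"
  proof (rule subsetI)
    fix S assume "S \<in> {S. is_solution n S \<and> respects_h n v S}"
    then have a: "is_solution n S" "respects_h n v S" by auto
    have l: "length S \<le> n + 2" using sol_bounds(1)[OF a] .
    have "set S \<subseteq> ?Ops"
    proof
      fix x assume x: "x \<in> set S"
      obtain r d where rd: "x = (r, d)" by (cases x)
      have ok: "opok n x" using a(1) x unfolding is_solution_alt by blast
      have "length r \<le> n + 3" using sol_bounds(2)[OF a] x rd by auto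
      moreover have "set r \<subseteq> {0..n+1}" "\<forall>w. d = Some w \<longrightarrow> w \<in> {1..n}"
        using ok rd unfolding opok_def by auto
      ultimately show "x \<in> ?Ops" using rd by (cases d) auto
    qed
    then show "S \<in> {S. set S \<subseteq> ?Ops \<and> length S \<le> n + 2}" using l by blast
  qed
  then show ?thesis using finite_lists_length_le[OF fo] finite_subset by blast
qed

lemma exists_sol:
  assumes "is_hamiltonian n v"
  shows "is_solution n [(map v [0..<n+2], None)] \<and> respects_h n v [(map v [0..<n+2], None)]"
proof -
  note h = ham_v[OF assms]
  have v0: "v 0 = 0" and vn: "v (n+1) = n+1" using assms by (auto simp: is_hamiltonian_def)
  have st: "set [0..<n+2] = {0..n+1}" by auto
  have sm: "set (map v [0..<n+2]) = {0..n+1}" unfolding set_map st by (rule h(2))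
  have dist: "distinct (map v [0..<n+2])" unfolding distinct_map st using h(1) by simp
  have ts: "truck_seq [(map v [0..<n+2], None)] = map v [0..<n+2]" by (simp add: truck_seq_def)
  have dn: "drone_nodes [(map v [0..<n+2], None)] = []" by (simp add: drone_nodes_def)
  have hd: "hd (map v [0..<n+2]) = 0" using v0 by (simp del: upt_Suc add: upt_conv_Cons)
  have lst: "last (map v [0..<n+2]) = n + 1" using vn by (simp add: last_map)
  have gen: "is_solution n [(L, None)]" if "set L = {0..n+1}" "distinct L" "hd L = 0"
     "last L = n+1" "length L \<ge> 2" for L
  proof -
    have cc: "count_list L c = 1" if "c \<in> {0..n+1}" for c
      using count_distinct[OF \<open>distinct L\<close>, of c] that \<open>set L = {0..n+1}\<close> by simp
    then have "\<forall>c\<in>{0..n+1}. count_list L c = 1" by blast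
    then have c: "count_list L 0 = 1" "count_list L (n+1) = 1" "\<forall>c\<in>{1..n}. count_list L c = 1"
      by auto
    have t: "truck_seq [(L, None)] = L" by (simp add: truck_seq_def)
    have d: "drone_nodes [(L, None)] = []" by (simp add: drone_nodes_def)
    have o: "\<forall>op\<in>set [(L, None::nat option)]. length (fst op) \<ge> 2 \<and> set (fst op) \<subseteq> {0..n+1} \<and>
        (\<forall>w. snd op = Some w \<longrightarrow> w \<in> {1..n} \<and> w \<notin> set (fst op))"
      using that(1,5) by simp
    have l: "\<forall>l. Suc l < length [(L, None::nat option)] \<longrightarrow> last (fst ([(L, None::nat option)] ! l)) = hd (fst ([(L, None::nat option)] ! Suc l))"
      by simp
    show ?thesis unfolding is_solution_def t d append_Nil2
      using c o l that(3,4) by simp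
  qed
  have "is_solution n [(map v [0..<n+2], None)]"
    by (rule gen[OF sm dist hd lst]) simp
  moreover have "respects_h n v [(map v [0..<n+2], None)]"
    unfolding respects_h_def ts
  proof (intro conjI)
    show "\<exists>ps. sorted_wrt (<) ps \<and> (\<forall>q\<in>set ps. q \<le> n + 1) \<and> map v ps = map v [0..<n + 2]"
      by (rule exI[of _ "[0..<n+2]"]) (simp del: upt_Suc)
  qed simp
  ultimately show ?thesis by blast
qed

lemma exists_opt:
  assumes "is_hamiltonian n v"
  shows "\<exists>S. h_optimal n tR tD v S"
proof -
  let ?F = "{S. is_solution n S \<and> respects_h n v S}"
  have ne: "?F \<noteq> {}" using exists_sol[OF assms] by blast
  have fin: "finite (sol_time tR tD ` ?F)" using finite_sols by blast
  obtain S0 where S0: "S0 \<in> ?F" "sol_time tR tD S0 = Min (sol_time tR tD ` ?F)"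
    using Min_in[OF fin] ne by fastforce
  have "\<forall>S\<in>?F. sol_time tR tD S0 \<le> sol_time tR tD S" using S0(2) fin by simp
  then show ?thesis using S0(1) unfolding h_optimal_def by blast
qed



lemma upt_app: "a \<le> b \<Longrightarrow> b \<le> c \<Longrightarrow> [a..<b] @ [b..<c] = [a..<c]"
  by (metis le_add_diff_inverse upt_add_eq_append)

definition seg :: "(nat \<Rightarrow> nat) \<Rightarrow> nat \<Rightarrow> nat \<Rightarrow> operation" where
  "seg v a b = (map v [a..<Suc b], None)"

lemma ro_facts:
  assumes "i < j" "j < k"
  shows "hd (fst (op_ijk v i j k)) = v i" "last (fst (op_ijk v i j k)) = v k"
    "length (fst (op_ijk v i j k)) = k - i" "snd (op_ijk v i j k) = Some (v j)"
    "set (fst (op_ijk v i j k)) = v ` ({i..k} - {j})"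
proof -
  have "[i..<j] = i # [Suc i..<j]" using assms by (simp add: upt_conv_Cons)
  then show "hd (fst (op_ijk v i j k)) = v i" by (simp add: op_ijk_def)
  have "[Suc j..<Suc k] = [Suc j..<k] @ [k]" using assms by simp
  then show "last (fst (op_ijk v i j k)) = v k" by (simp add: op_ijk_def)
  show "length (fst (op_ijk v i j k)) = k - i" using assms by (simp add: op_ijk_def)
  show "snd (op_ijk v i j k) = Some (v j)" by (simp add: op_ijk_def)
  have "set ([i..<j] @ [Suc j..<Suc k]) = {i..k} - {j}" using assms by auto
  then show "set (fst (op_ijk v i j k)) = v ` ({i..k} - {j})" unfolding op_ijk_def fst_conv set_map by simp
qed

lemma op_eq:
  assumes h: "is_hamiltonian n v" and "a < j" "j < b" "b \<le> n + 1" "i < j" "j < k" "k \<le> n + 1"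
    and eq: "op_ijk v a j b = op_ijk v i j k"
  shows "a = i \<and> b = k"
proof -
  have "v a = v i" using ro_facts(1)[of a j b v] ro_facts(1)[of i j k v] eq assms by simp
  then have "a = i" using inj_onD[OF ham_v(1)[OF h]] assms by auto
  moreover have "b - a = k - i" using ro_facts(3)[of a j b v] ro_facts(3)[of i j k v] eq assms by simp
  ultimately show ?thesis using assms by simp
qed

lemma Q_props:
  assumes h: "is_hamiltonian n v" and ii: "i' \<le> i" "i < j" "j < k" "k \<le> k'" "k' \<le> n + 1"
    and fast: "drone_fast tR tD (op_ijk v i j k)"
    and Qdef: "Q = (if i' < i then [seg v i' i] else []) @ [op_ijk v i j k] @ (if k < k' then [seg v k k'] else [])"
  shows "Q \<noteq> []" "\<forall>q\<in>set Q. opok n q \<and> dok n v q" "successively lnk Q"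
    "truck_seq Q = fst (op_ijk v i' j k')" "drone_nodes Q = drone_nodes [op_ijk v i' j k']"
    "\<forall>q\<in>set Q. op_time tR tD q = path_time tR (fst q)"
    "\<forall>q\<in>set Q. q \<noteq> op_ijk v i j k \<longrightarrow> snd q = None"
proof -
  note hv = ham_v[OF h]
  let ?o = "op_ijk v i j k"
  note rf = ro_facts[OF ii(2,3), of v]
  show "Q \<noteq> []" using Qdef by simp
  have vj: "v j \<in> {1..n}"
  proof -
    have "j \<in> {1..n}" using ii by auto
    then show ?thesis using h unfolding is_hamiltonian_def bij_betw_def by auto
  qed
  have okO: "opok n ?o"
  proof -
    have "length (fst ?o) \<ge> 2" using rf(3) ii by simp
    moreover have "set (fst ?o) \<subseteq> {0..n+1}" using rf(5) hv(2) ii by auto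
    moreover have "v j \<notin> set (fst ?o)"
    proof
      assume "v j \<in> set (fst ?o)"
      then obtain x where x: "x \<in> {i..k} - {j}" "v j = v x" unfolding rf(5) image_iff by blast
      then have "x = j" using inj_onD[OF hv(1), of x j] ii by auto
      then show False using x by simp
    qed
    ultimately show ?thesis using rf(4) vj unfolding opok_def by simp
  qed
  have dokO: "dok n v ?o" unfolding dok_def using rf ii by (intro allI impI exI[of _ i] exI[of _ j] exI[of _ k]) auto
  have okS: "opok n (seg v a b) \<and> dok n v (seg v a b)" if "a < b" "b \<le> n + 1" for a b
  proof -
    have "set [a..<Suc b] \<subseteq> {0..n+1}" using that by auto
    then have "set (map v [a..<Suc b]) \<subseteq> {0..n+1}" using hv(2) by auto
    then show ?thesis using that unfolding opok_def dok_def seg_def by auto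
  qed
  show "\<forall>q\<in>set Q. opok n q \<and> dok n v q" using Qdef okO dokO okS ii by auto
  have l1: "lnk (seg v i' i) ?o" using rf(1) ii(1) by (simp add: lnk_def seg_def)
  have l2: "lnk ?o (seg v k k')" using rf(2) ii(4) by (simp add: lnk_def seg_def upt_conv_Cons del: upt_Suc)
  show "successively lnk Q" using Qdef l1 l2 by (auto simp: successively_append_iff)
  have X: "(if i' < i then map v [i'..<Suc i] @ tl (fst ?o) else fst ?o) = map v ([i'..<j] @ [Suc j..<Suc k])"
  proof (cases "i' < i")
    case True
    have "tl (fst ?o) = map v ([Suc i..<j] @ [Suc j..<Suc k])"
      using ii by (simp add: op_ijk_def upt_conv_Cons del: upt_Suc)
    moreover have "[i'..<Suc i] @ [Suc i..<j] = [i'..<j]" using ii True by (intro upt_app) auto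
    ultimately show ?thesis using True by (metis append.assoc map_append)
  next
    case False then show ?thesis using ii by (simp add: op_ijk_def)
  qed
  have Y: "map v ([i'..<j] @ [Suc j..<Suc k]) @ (if k < k' then tl (map v [k..<Suc k']) else [])
     = fst (op_ijk v i' j k')"
  proof (cases "k < k'")
    case True
    have "tl (map v [k..<Suc k']) = map v [Suc k..<Suc k']"
      using True by (simp add: upt_conv_Cons del: upt_Suc)
    moreover have "[Suc j..<Suc k] @ [Suc k..<Suc k'] = [Suc j..<Suc k']" using ii True by (intro upt_app) auto
    ultimately show ?thesis using True unfolding op_ijk_def fst_conv
      by (metis append.assoc map_append if_True)
  next
    case False then show ?thesis using ii by (simp add: op_ijk_def)
  qed
  have "truck_seq Q = (if i' < i then map v [i'..<Suc i] @ tl (fst ?o) else fst ?o)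
      @ (if k < k' then tl (map v [k..<Suc k']) else [])"
    using Qdef by (simp add: truck_seq_def seg_def)
  then show "truck_seq Q = fst (op_ijk v i' j k')" using X Y by simp
  show "drone_nodes Q = drone_nodes [op_ijk v i' j k']"
    using Qdef by (simp add: drone_nodes_def seg_def op_ijk_def)
  have tO: "op_time tR tD ?o = path_time tR (fst ?o)"
    using fast rf(4) by (simp add: drone_fast_def op_time_def)
  show "\<forall>q\<in>set Q. op_time tR tD q = path_time tR (fst q)"
    using Qdef tO by (auto simp: seg_def op_time_def)
  show "\<forall>q\<in>set Q. q \<noteq> op_ijk v i j k \<longrightarrow> snd q = None"
    using Qdef by (auto simp: seg_def)
qed



lemma mem_drone: "x \<in> set X \<Longrightarrow> snd x = Some w \<Longrightarrow> w \<in> set (drone_nodes X)"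
  unfolding drone_nodes_def by (auto intro!: bexI[of _ x])

theorem mainTheorem4:
  fixes n :: nat and tR tD :: "nat \<Rightarrow> nat \<Rightarrow> real" and v :: "nat \<Rightarrow> nat"
    and i j k :: nat
  assumes "n > 0"
    and "\<forall>x \<in> {0..n+1}. \<forall>y \<in> {0..n+1}. tR x y \<ge> 0 \<and> tD x y \<ge> 0"
    and "is_hamiltonian n v"
    and "i < j" and "j < k" and "k \<le> n + 1"
    and "drone_fast tR tD (op_ijk v i j k)"
  shows "\<exists>S. h_optimal n tR tD v S \<and>
    (\<forall>i' k'. i' \<le> i \<longrightarrow> k \<le> k' \<longrightarrow> k' \<le> n + 1 \<longrightarrow> (i', k') \<noteq> (i, k)
        \<longrightarrow> op_ijk v i' j k' \<notin> set S)"
proof -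
  obtain S0 where opt: "h_optimal n tR tD v S0" using exists_opt[OF assms(3)] by blast
  show ?thesis
  proof (cases "\<exists>i' k'. i' \<le> i \<and> k \<le> k' \<and> k' \<le> n + 1 \<and> (i', k') \<noteq> (i, k) \<and> op_ijk v i' j k' \<in> set S0")
    case False then show ?thesis using opt by blast
  next
    case True
    then obtain i' k' where ik: "i' \<le> i" "k \<le> k'" "k' \<le> n + 1" "op_ijk v i' j k' \<in> set S0" by blast
    let ?o' = "op_ijk v i' j k'"
    obtain A B where S0: "S0 = A @ ?o' # B" using split_list[OF ik(4)] by blast
    define Q where "Q = (if i' < i then [seg v i' i] else []) @ [op_ijk v i j k] @ (if k < k' then [seg v k k'] else [])"
    note qp = Q_props[OF assms(3) ik(1) assms(4,5) ik(2,3) assms(7) Q_def]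
    have sol0: "is_solution n S0" and resp0: "respects_h n v S0"
      and min0: "\<forall>S'. is_solution n S' \<and> respects_h n v S' \<longrightarrow> sol_time tR tD S0 \<le> sol_time tR tD S'"
      using opt unfolding h_optimal_def by blast+
    have sr: "is_solution n (A @ Q @ B) \<and> respects_h n v (A @ Q @ B)"
      using replace[OF sol0[unfolded S0] resp0[unfolded S0] qp(1,2,3,4,5)] .
    have len: "\<forall>q\<in>set Q. length (fst q) \<ge> 2" using qp(2) by (auto simp: opok_def)
    have tm: "sol_time tR tD (A @ Q @ B) \<le> sol_time tR tD S0"
      unfolding S0 using replace_time[OF qp(1) len qp(3,4,6)] .
    have "\<forall>S'. is_solution n S' \<and> respects_h n v S' \<longrightarrow> sol_time tR tD (A @ Q @ B) \<le> sol_time tR tD S'"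
      using tm min0 order_trans by blast
    then have opt2: "h_optimal n tR tD v (A @ Q @ B)"
      unfolding h_optimal_def using sr by blast
    have vj: "v j \<in> {1..n}"
    proof -
      have "j \<in> {1..n}" using assms ik by auto
      then show ?thesis using assms(3) unfolding is_hamiltonian_def bij_betw_def by auto
    qed
    have sndo: "snd (op_ijk v a j b) = Some (v j)" for a b by (simp add: op_ijk_def)
    have cnt: "count_list (truck_seq S0 @ drone_nodes S0) (v j) = 1"
      using sol0 vj unfolding is_solution_def by blast
    have dS0: "drone_nodes S0 = drone_nodes A @ [v j] @ drone_nodes B"
      unfolding S0 by (simp add: drone_nodes_def op_ijk_def)
    have nA: "v j \<notin> set (drone_nodes A)" and nB: "v j \<notin> set (drone_nodes B)"
    proof -
      have "count_list (drone_nodes A) (v j) + 1 + count_list (drone_nodes B) (v j) \<le> 1"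
        using cnt dS0 by simp
      then show "v j \<notin> set (drone_nodes A)" "v j \<notin> set (drone_nodes B)"
        by (auto simp: count_list_0_iff[symmetric])
    qed
    have "\<forall>a b. a \<le> i \<longrightarrow> k \<le> b \<longrightarrow> b \<le> n + 1 \<longrightarrow> (a, b) \<noteq> (i, k)
        \<longrightarrow> op_ijk v a j b \<notin> set (A @ Q @ B)"
    proof (intro allI impI notI)
      fix a b assume ab: "a \<le> i" "k \<le> b" "b \<le> n + 1" "(a, b) \<noteq> (i, k)"
        and mem: "op_ijk v a j b \<in> set (A @ Q @ B)"
      consider "op_ijk v a j b \<in> set A" | "op_ijk v a j b \<in> set Q" | "op_ijk v a j b \<in> set B"
        using mem by auto
      then show False
      proof cases
        case 1 then show False using mem_drone[OF 1 sndo] nA by blast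
      next
        case 3 then show False using mem_drone[OF 3 sndo] nB by blast
      next
        case 2
        then have "op_ijk v a j b = op_ijk v i j k" using qp(7) sndo[of a b] by (metis option.distinct(1))
        moreover have "a < j" "j < b" using ab assms(4,5) by auto
        ultimately have "a = i \<and> b = k" using op_eq[OF assms(3) _ _ ab(3) assms(4,5,6)] by blast
        then show False using ab by simp
      qed
    qed
    then show ?thesis using opt2 by blast
  qed
qed


end
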